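(* Let $\mathcal{D}=\{t_1,\dots,t_n\}$ be a relational database whose tables are indexed according to a topological order of its (acyclic) foreign-key graph, and let $\preceq^*$ (ascend-or-equal) and $\preceq$ (affect-or-equal) be the relations on $\mathcal{D}$ defined below. Then $\preceq$ is a partial order on $\mathcal{D}$ (reflexive, antisymmetric and transitive).
   Context: A relational database is a finite set of tables $t_1,\dots,t_n$. A foreign key constraint $\phi_{ij}$ means that table $t_i$ is a parent of table $t_j$ (i.e. $t_j$ references $t_i$); $\Phi_j$ denotes the set of all foreign key constraints on $t_j$. The directed graph whose vertices are the tables and with an edge from $t_i$ to $t_j$ whenever some $\phi_{ij}\in\Phi_j$ is assumed acyclic, and the indices are chosen according to a topological order of this graph, so that $\phi_{ij}\in\Phi_j$ implies $i<j$. Write $\mathbb{N}_m=\{1,2,\dots,m\}$. The relation ascend-or-equal $\preceq^*$ is defined by: $t_i\preceq^* t_j$ iff $i=j$, or there exists $k\in\mathbb{N}_n$ with $\phi_{ik}\in\Phi_k$ and $t_k\preceq^* t_j$ (i.e. $t_i$ equals $t_j$ or is an ancestor of $t_j$). The relation affect-or-equal $\preceq$ is the (smallest) relation satisfying: $t_i\preceq t_j$ iff $t_i\preceq^* t_j$, or [$i<j$ and there exists $k\in\mathbb{N}_{j-1}\setminus\{i\}$ such that ($t_i\preceq t_k$ or $t_k\preceq t_i$) and $t_k\preceq t_j$]. *)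

theory Defs
  imports Main
begin

text \<open>Tables t_1..t_n are represented by their indices 1..n.
  fk i j means: some foreign key constraint phi_ij is in Phi_j (t_i is a parent of t_j).\<close>

inductive ascend_eq :: "nat \<Rightarrow> (nat \<Rightarrow> nat \<Rightarrow> bool) \<Rightarrow> nat \<Rightarrow> nat \<Rightarrow> bool"
  for n :: nat and fk :: "nat \<Rightarrow> nat \<Rightarrow> bool" where
  refl: "i \<in> {1..n} \<Longrightarrow> ascend_eq n fk i i"
| step: "k \<in> {1..n} \<Longrightarrow> fk i k \<Longrightarrow> ascend_eq n fk k j \<Longrightarrow> ascend_eq n fk i j"

inductive affect_eq :: "nat \<Rightarrow> (nat \<Rightarrow> nat \<Rightarrow> bool) \<Rightarrow> nat \<Rightarrow> nat \<Rightarrow> bool"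
  for n :: nat and fk :: "nat \<Rightarrow> nat \<Rightarrow> bool" where
  asc: "ascend_eq n fk i j \<Longrightarrow> affect_eq n fk i j"
| via: "i < j \<Longrightarrow> k \<in> {1..j-1} - {i} \<Longrightarrow>
        (affect_eq n fk i k \<or> affect_eq n fk k i) \<Longrightarrow> affect_eq n fk k j \<Longrightarrow>
        affect_eq n fk i j"

end

theory Submission
  imports Defs
begin

lemma asc_props:
  assumes fk: "\<And>i j. fk i j \<Longrightarrow> i \<in> {1..n} \<and> j \<in> {1..n} \<and> i < j"
  shows "ascend_eq n fk i j \<Longrightarrow> i \<in> {1..n} \<and> j \<in> {1..n} \<and> i \<le> j"
proof (induction rule: ascend_eq.induct)
  case (refl i) then show ?case by simp
next
  case (step k i j) then show ?case using fk[of i k] by auto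
qed

lemma aff_props:
  assumes fk: "\<And>i j. fk i j \<Longrightarrow> i \<in> {1..n} \<and> j \<in> {1..n} \<and> i < j"
  shows "affect_eq n fk i j \<Longrightarrow> i \<in> {1..n} \<and> j \<in> {1..n} \<and> i \<le> j"
proof (induction rule: affect_eq.induct)
  case (asc i j) then show ?case using asc_props fk by metis
next
  case (via i j k) then show ?case by auto
qed

theorem lemma3p3:
  fixes n :: nat and fk :: "nat \<Rightarrow> nat \<Rightarrow> bool"
  assumes "\<And>i j. fk i j \<Longrightarrow> i \<in> {1..n} \<and> j \<in> {1..n} \<and> i < j"
  shows "partial_order_on {1..n} {(i, j). affect_eq n fk i j}"
proof -
  have P: "\<And>i j. affect_eq n fk i j \<Longrightarrow> i \<in> {1..n} \<and> j \<in> {1..n} \<and> i \<le> j"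
    using aff_props assms by metis
  have sub: "{(i, j). affect_eq n fk i j} \<subseteq> {1..n} \<times> {1..n}" using P by blast
  have rf: "refl_on {1..n} {(i, j). affect_eq n fk i j}"
    unfolding refl_on_def by (simp add: affect_eq.asc ascend_eq.refl)
  have tr: "trans {(i, j). affect_eq n fk i j}"
  proof (rule transI, clarsimp)
    fix x y z assume a: "affect_eq n fk x y" and b: "affect_eq n fk y z"
    show "affect_eq n fk x z"
    proof (cases "x = y \<or> y = z")
      case True then show ?thesis using a b by auto
    next
      case False
      with P[OF a] P[OF b] have "x < z" "y \<in> {1..z-1} - {x}" by auto
      then show ?thesis using a b by (blast intro: affect_eq.via)
    qed
  qed
  have an: "antisym {(i, j). affect_eq n fk i j}"
    proof (rule antisymI, clarsimp)
    fix x y assume "affect_eq n fk x y" "affect_eq n fk y x"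
    then show "x = y" using P[of x y] P[of y x] by simp
  qed
  show ?thesis unfolding partial_order_on_def preorder_on_def using sub rf tr an by blast
qed

end
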